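(* If the point graph of a partial geometry $pg(s,2,3)$ (with $s\ge 2$) is $3$-e.c., then $s\le 15$.
   Context: A partial geometry $pg(s,t,\alpha)$ is an incidence structure of points and lines such that any two distinct points lie on at most one common line, every line contains exactly $s+1$ points, every point lies on exactly $t+1$ lines, and for every point $p$ and line $L$ with $p$ not on $L$ there are exactly $\alpha$ lines through $p$ meeting $L$. The point graph has the points as vertices, two distinct points adjacent iff collinear. (A $pg(s,2,3)$ is the dual of a Steiner triple system on $2s+3$ points, and its point graph is the block-intersection graph of that system.) A graph with vertex set $V$ is $n$-e.c. if for every pair of disjoint subsets $A,B\subseteq V$ with $|A\cup B|=n$ (either may be empty) there is a vertex $z\notin A\cup B$ adjacent to every vertex of $A$ and to no vertex of $B$. *)

theory Defs
  imports Main
begin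

definition partial_geometry ::
  "'p set \<Rightarrow> 'l set \<Rightarrow> ('p \<Rightarrow> 'l \<Rightarrow> bool) \<Rightarrow> nat \<Rightarrow> nat \<Rightarrow> nat \<Rightarrow> bool" where
  "partial_geometry P L I s t \<alpha> \<longleftrightarrow>
     P \<noteq> {} \<and>
     (\<forall>p\<in>P. \<forall>q\<in>P. p \<noteq> q \<longrightarrow> card {l\<in>L. I p l \<and> I q l} \<le> 1) \<and>
     (\<forall>l\<in>L. finite {p\<in>P. I p l} \<and> card {p\<in>P. I p l} = s + 1) \<and>
     (\<forall>p\<in>P. finite {l\<in>L. I p l} \<and> card {l\<in>L. I p l} = t + 1) \<and>
     (\<forall>p\<in>P. \<forall>l\<in>L. \<not> I p l \<longrightarrow>
        card {m\<in>L. I p m \<and> (\<exists>q\<in>P. I q m \<and> I q l)} = \<alpha>)"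

definition point_graph_adj :: "'p set \<Rightarrow> 'l set \<Rightarrow> ('p \<Rightarrow> 'l \<Rightarrow> bool) \<Rightarrow> 'p \<Rightarrow> 'p \<Rightarrow> bool" where
  "point_graph_adj P L I p q \<longleftrightarrow> p \<in> P \<and> q \<in> P \<and> p \<noteq> q \<and> (\<exists>l\<in>L. I p l \<and> I q l)"

definition n_ec :: "nat \<Rightarrow> 'a set \<Rightarrow> ('a \<Rightarrow> 'a \<Rightarrow> bool) \<Rightarrow> bool" where
  "n_ec n V E \<longleftrightarrow>
     (\<forall>A B. A \<subseteq> V \<longrightarrow> B \<subseteq> V \<longrightarrow> A \<inter> B = {} \<longrightarrow> finite (A \<union> B) \<longrightarrow> card (A \<union> B) = n \<longrightarrow>
        (\<exists>z\<in>V. z \<notin> A \<union> B \<and> (\<forall>a\<in>A. E z a) \<and> (\<forall>b\<in>B. \<not> E z b)))"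

end

theory Submission
  imports Defs
begin

lemma double_count:
  assumes "finite A" "finite B"
  shows "(\<Sum>a\<in>A. card {b\<in>B. R a b}) = (\<Sum>b\<in>B. card {a\<in>A. R a b})"
proof -
  have "(\<Sum>a\<in>A. card {b\<in>B. R a b}) = (\<Sum>a\<in>A. \<Sum>b\<in>{b\<in>B. R a b}. 1)" by simp
  also have "\<dots> = (\<Sum>b\<in>B. \<Sum>a\<in>{a\<in>A. R a b}. 1)"
    by (rule sum.swap_restrict[OF assms])
  also have "\<dots> = (\<Sum>b\<in>B. card {a\<in>A. R a b})" by simp
  finally show ?thesis .
qed

lemma card_offdiag:
  assumes "finite A"
  shows "card {pr\<in>A\<times>A. fst pr \<noteq> snd pr} = card A * (card A - 1)"
proof -
  have eq: "A \<times> A = {pr\<in>A\<times>A. fst pr \<noteq> snd pr} \<union> (\<lambda>x. (x,x)) ` A" by auto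
  have "card (A \<times> A) = card {pr\<in>A\<times>A. fst pr \<noteq> snd pr} + card ((\<lambda>x. (x,x)) ` A)"
    by (subst eq, rule card_Un_disjoint) (use assms in auto)
  moreover have "card ((\<lambda>x. (x,x)) ` A) = card A" by (rule card_image) (auto intro: inj_onI)
  ultimately show ?thesis by (simp add: card_cartesian_product diff_mult_distrib2)
qed

locale pg23 =
  fixes P :: "'p set" and L :: "'l set" and I :: "'p \<Rightarrow> 'l \<Rightarrow> bool" and s :: nat
  assumes pg: "partial_geometry P L I s 2 3"
begin

definition lines where "lines p = {l\<in>L. I p l}"
definition pts where "pts l = {p\<in>P. I p l}"

lemma Pne: "P \<noteq> {}" using pg unfolding partial_geometry_def by auto

lemma lines_fin: "p \<in> P \<Longrightarrow> finite (lines p)"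
  using pg unfolding partial_geometry_def lines_def by auto
lemma lines_card: "p \<in> P \<Longrightarrow> card (lines p) = 3"
  using pg unfolding partial_geometry_def lines_def by auto
lemma pts_fin: "l \<in> L \<Longrightarrow> finite (pts l)"
  using pg unfolding partial_geometry_def pts_def by auto
lemma pts_card: "l \<in> L \<Longrightarrow> card (pts l) = s + 1"
  using pg unfolding partial_geometry_def pts_def by auto

lemma pts_ne: assumes "l \<in> L" obtains p where "p \<in> P" "I p l"
proof -
  have "pts l \<noteq> {}" using pts_card[OF assms] pts_fin[OF assms] by auto
  then show ?thesis using that unfolding pts_def by auto
qed

lemma lines_ne: assumes "p \<in> P" obtains l where "l \<in> L" "I p l"
proof -
  have "lines p \<noteq> {}" using lines_card[OF assms] by auto
  then show ?thesis using that unfolding lines_def by auto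
qed

lemma uniq:
  assumes "p\<in>P" "q\<in>P" "p\<noteq>q" "l\<in>L" "m\<in>L" "I p l" "I q l" "I p m" "I q m"
  shows "l = m"
proof -
  have c: "card {l\<in>L. I p l \<and> I q l} \<le> 1" using pg assms unfolding partial_geometry_def by auto
  have "finite {l\<in>L. I p l \<and> I q l}"
    using lines_fin[OF assms(1)] unfolding lines_def by (rule finite_subset[rotated]) auto
  with c show ?thesis using assms by (auto simp: card_le_Suc0_iff_eq)
qed

lemma meet:
  assumes "l\<in>L" "m\<in>L"
  obtains q where "q\<in>P" "I q l" "I q m"
proof -
  obtain p where p: "p \<in> P" "I p m" using pts_ne[OF assms(2)] by blast
  show ?thesis
  proof (cases "I p l")
    case True then show ?thesis using that p by blast
  next
    case False
    let ?X = "{m'\<in>L. I p m' \<and> (\<exists>q\<in>P. I q m' \<and> I q l)}"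
    have c: "card ?X = 3" using pg p False assms unfolding partial_geometry_def by auto
    have sub: "?X \<subseteq> lines p" unfolding lines_def by auto
    have "?X = lines p"
      by (rule card_subset_eq[OF lines_fin[OF p(1)] sub]) (simp add: c lines_card[OF p(1)])
    then have "m \<in> ?X" using p assms unfolding lines_def by auto
    then show ?thesis using that by blast
  qed
qed

lemma finP: "finite P"
proof -
  obtain p0 where p0: "p0 \<in> P" using Pne by auto
  obtain L0 where L0: "L0 \<in> L" "I p0 L0" using lines_ne[OF p0] by blast
  have "P \<subseteq> (\<Union>q\<in>pts L0. \<Union>m\<in>lines q. pts m)"
  proof
    fix p assume p: "p \<in> P"
    obtain l where l: "l \<in> L" "I p l" using lines_ne[OF p] by blast
    obtain q where "q\<in>P" "I q l" "I q L0" using meet[OF l(1) L0(1)] by blast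
    then show "p \<in> (\<Union>q\<in>pts L0. \<Union>m\<in>lines q. pts m)"
      using l p by (auto simp: pts_def lines_def)
  qed
  moreover have "finite (\<Union>q\<in>pts L0. \<Union>m\<in>lines q. pts m)"
    using pts_fin[OF L0(1)] by (auto simp: pts_def lines_def intro!: pts_fin[unfolded pts_def] lines_fin[unfolded lines_def])
  ultimately show ?thesis by (rule finite_subset)
qed

lemma finL: "finite L"
proof -
  have "L \<subseteq> (\<Union>p\<in>P. lines p)"
  proof
    fix l assume "l \<in> L"
    then obtain p where "p\<in>P" "I p l" using pts_ne by blast
    then show "l \<in> (\<Union>p\<in>P. lines p)" using \<open>l \<in> L\<close> by (auto simp: lines_def)
  qed
  moreover have "finite (\<Union>p\<in>P. lines p)" using finP lines_fin by auto
  ultimately show ?thesis by (rule finite_subset)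
qed

lemma count_PL: "3 * card P = card L * (s + 1)"
proof -
  have "(\<Sum>p\<in>P. card {l\<in>L. I p l}) = (\<Sum>l\<in>L. card {p\<in>P. I p l})"
    by (rule double_count[OF finP finL])
  moreover have "(\<Sum>p\<in>P. card {l\<in>L. I p l}) = (\<Sum>p\<in>P. 3)"
    by (rule sum.cong) (auto simp: lines_card[unfolded lines_def])
  moreover have "(\<Sum>l\<in>L. card {p\<in>P. I p l}) = (\<Sum>l\<in>L. s + 1)"
    by (rule sum.cong) (auto simp: pts_card[unfolded pts_def])
  ultimately show ?thesis by (simp add: mult.commute)
qed

lemma card_L: "card L \<ge> 2 * s + 3"
proof -
  obtain p0 where p0: "p0 \<in> P" using Pne by auto
  obtain L0 where L0: "L0 \<in> L" "I p0 L0" using lines_ne[OF p0] by blast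
  let ?X = "\<Union>q\<in>pts L0. lines q - {L0}"
  have "card ?X = (\<Sum>q\<in>pts L0. card (lines q - {L0}))"
  proof (rule card_UN_disjoint)
    show "finite (pts L0)" using pts_fin[OF L0(1)] .
    show "\<forall>i\<in>pts L0. finite (lines i - {L0})" using lines_fin by (auto simp: pts_def)
    show "\<forall>i\<in>pts L0. \<forall>j\<in>pts L0. i \<noteq> j \<longrightarrow> (lines i - {L0}) \<inter> (lines j - {L0}) = {}"
      using uniq L0(1) by (auto simp: pts_def lines_def)
  qed
  also have "\<dots> = (\<Sum>q\<in>pts L0. 2)"
  proof (rule sum.cong)
    fix q assume q: "q \<in> pts L0"
    then have "q \<in> P" "L0 \<in> lines q" using L0 by (auto simp: pts_def lines_def)
    then show "card (lines q - {L0}) = 2" using lines_card lines_fin by simp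
  qed simp
  also have "\<dots> = 2 * (s + 1)" using pts_card[OF L0(1)] by simp
  finally have cX: "card ?X = 2 * (s+1)" .
  have "insert L0 ?X \<subseteq> L" by (auto simp: lines_def L0)
  then have "card (insert L0 ?X) \<le> card L" using finL by (rule card_mono[rotated])
  moreover have "card (insert L0 ?X) = Suc (card ?X)"
    by (rule card_insert_disjoint) (use finL \<open>insert L0 ?X \<subseteq> L\<close> in \<open>auto intro: finite_subset\<close>)
  ultimately show ?thesis using cX by simp
qed


lemma main:
  assumes ec: "n_ec 3 P (point_graph_adj P L I)"
  shows "s \<le> 15"
proof (rule ccontr)
  assume "\<not> s \<le> 15"
  then have s16: "s \<ge> 16" by simp
  have cP: "3 * card P \<ge> (2*s+3)*(s+1)" using count_PL mult_le_mono1[OF card_L, of "s+1"] by simp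
  obtain a where a: "a \<in> P" using Pne by auto
  let ?C = "insert a (\<Union>l\<in>lines a. pts l)"
  have cC1: "card ?C \<le> Suc (card (\<Union>l\<in>lines a. pts l))"
    by (cases "finite (\<Union>l\<in>lines a. pts l)") (simp_all add: card_insert_if)
  have cC0: "card (\<Union>l\<in>lines a. pts l) \<le> (\<Sum>l\<in>lines a. card (pts l))"
    by (rule card_UN_le[OF lines_fin[OF a]])
  also have "\<dots> = (\<Sum>l\<in>lines a. s + 1)"
    by (rule sum.cong) (auto simp: lines_def pts_card)
  also have "\<dots> = 3 * (s+1)" using lines_card[OF a] by simp
  finally have "card ?C \<le> 3*(s+1) + 1" using cC1 by linarith
  then have "card ?C < card P"
  proof -
    assume h: "card ?C \<le> 3*(s+1) + 1"
    have "(2*s+3)*(s+1) > 3 * (3*(s+1)+1)" 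
    proof -
      obtain t where "s = t + 16" using s16 by (metis le_add_diff_inverse2)
      then show ?thesis by (simp add: algebra_simps)
    qed
    then have "3*(3*(s+1)+1) < 3 * card P" using cP by (rule less_le_trans)
    moreover have "3 * card ?C \<le> 3*(3*(s+1)+1)" using h by (rule mult_le_mono2)
    ultimately have "3 * card ?C < 3 * card P" by (rule le_less_trans[rotated])
    then show ?thesis by simp
  qed
  moreover have finC: "finite ?C" using lines_fin[OF a] pts_fin by (auto simp: lines_def)
  ultimately have "\<not> P \<subseteq> ?C" using card_mono[OF finC, of P] by linarith
  then obtain b where b: "b \<in> P" "b \<notin> ?C" by blast
  have ab: "a \<noteq> b" using b by auto
  have nab: "\<And>l. l \<in> L \<Longrightarrow> I a l \<Longrightarrow> \<not> I b l" using b by (auto simp: lines_def pts_def)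
  define T where "T = {z\<in>P. (\<exists>l\<in>lines a. I z l) \<and> (\<exists>l\<in>lines b. I z l)}"
  define S where "S = {M\<in>L. \<exists>z\<in>insert a (insert b T). I z M}"
  define X where "X = (\<lambda>la lb. {M\<in>L. \<exists>z\<in>P. I z la \<and> I z lb \<and> I z M \<and> M \<noteq> la \<and> M \<noteq> lb})"
  have X1: "card (X la lb) \<le> 1" if la: "la \<in> lines a" and lb: "lb \<in> lines b" for la lb
  proof -
    have "finite (X la lb)" using finL unfolding X_def by auto
    moreover have "M = M'" if hM: "M \<in> X la lb" and hM': "M' \<in> X la lb" for M M'
    proof (rule ccontr)
      assume ne: "M \<noteq> M'"
      obtain z where z: "z\<in>P" "I z la" "I z lb" "I z M" "M \<noteq> la" "M \<noteq> lb" "M \<in> L"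
        using hM unfolding X_def by auto
      obtain z' where z': "z'\<in>P" "I z' la" "I z' lb" "I z' M'" "M' \<noteq> la" "M' \<noteq> lb" "M' \<in> L"
        using hM' unfolding X_def by auto
      have lalb: "la \<noteq> lb" using la lb nab by (auto simp: lines_def)
      have "z = z'" using uniq[of z z' la lb] z z' lalb la lb by (auto simp: lines_def)
      then have "{la, lb, M, M'} \<subseteq> lines z" using z z' la lb by (auto simp: lines_def)
      then have "card {la, lb, M, M'} \<le> 3" using lines_card[OF z(1)] lines_fin[OF z(1)]
        by (metis card_mono)
      moreover have "card {la, lb, M, M'} = 4" using lalb ne z z' by auto
      ultimately show False by simp
    qed
    ultimately show ?thesis by (auto simp: card_le_Suc0_iff_eq)
  qed
  have Ssub: "S \<subseteq> lines a \<union> lines b \<union> (\<Union>la\<in>lines a. \<Union>lb\<in>lines b. X la lb)"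
  proof
    fix M assume "M \<in> S"
    then obtain z where M: "M \<in> L" "z \<in> insert a (insert b T)" "I z M" unfolding S_def by auto
    show "M \<in> lines a \<union> lines b \<union> (\<Union>la\<in>lines a. \<Union>lb\<in>lines b. X la lb)"
    proof (cases "z \<in> T")
      case True
      then obtain la lb where "la \<in> lines a" "lb \<in> lines b" "I z la" "I z lb" "z \<in> P"
        unfolding T_def by auto
      then show ?thesis using M unfolding X_def by (auto simp: lines_def)
    next
      case False
      then show ?thesis using M by (auto simp: lines_def)
    qed
  qed
  have cU: "card (\<Union>la\<in>lines a. \<Union>lb\<in>lines b. X la lb) \<le> 9"
  proof -
    have "card (\<Union>la\<in>lines a. \<Union>lb\<in>lines b. X la lb) \<le> (\<Sum>la\<in>lines a. card (\<Union>lb\<in>lines b. X la lb))"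
      by (rule card_UN_le[OF lines_fin[OF a]])
    also have "\<dots> \<le> (\<Sum>la\<in>lines a. \<Sum>lb\<in>lines b. card (X la lb))"
      by (rule sum_mono, rule card_UN_le[OF lines_fin[OF b(1)]])
    also have "\<dots> \<le> (\<Sum>la\<in>lines a. \<Sum>lb\<in>lines b. 1)"
      by (intro sum_mono X1)
    also have "\<dots> = 9" using lines_card a b(1) by simp
    finally show ?thesis .
  qed
  have finS: "finite S" using finL unfolding S_def by auto
  have kS: "card S \<le> 15"
  proof -
    have "card S \<le> card (lines a \<union> lines b \<union> (\<Union>la\<in>lines a. \<Union>lb\<in>lines b. X la lb))"
      by (rule card_mono[OF _ Ssub]) (use finL in \<open>auto simp: lines_def X_def intro: finite_subset\<close>)
    also have "\<dots> \<le> card (lines a) + card (lines b) + card (\<Union>la\<in>lines a. \<Union>lb\<in>lines b. X la lb)"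
      by (meson card_Un_le add_le_mono1 order_trans)
    finally show ?thesis using cU lines_card a b(1) by simp
  qed
  define U where "U = {p\<in>P. \<exists>M\<in>S. I p M}"
  define d where "d = (\<lambda>p. card {M\<in>S. I p M})"
  have finU: "finite U" using finP unfolding U_def by auto
  have SL: "S \<subseteq> L" unfolding S_def by auto
  have sum1: "(\<Sum>p\<in>U. d p) = card S * (s+1)"
  proof -
    have "(\<Sum>p\<in>U. d p) = (\<Sum>M\<in>S. card {p\<in>U. I p M})"
      unfolding d_def by (rule double_count[OF finU finS])
    also have "\<dots> = (\<Sum>M\<in>S. s + 1)"
    proof (rule sum.cong)
      fix M assume "M \<in> S"
      then have "{p\<in>U. I p M} = pts M" "M \<in> L" using SL unfolding U_def pts_def by auto
      then show "card {p\<in>U. I p M} = s + 1" using pts_card by simp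
    qed simp
    finally show ?thesis by simp
  qed
  define D where "D = {pr\<in>S\<times>S. fst pr \<noteq> snd pr}"
  have finD: "finite D" using finS unfolding D_def by auto
  have sum2: "(\<Sum>p\<in>U. d p * (d p - 1)) = card S * (card S - 1)"
  proof -
    have "(\<Sum>p\<in>U. d p * (d p - 1)) = (\<Sum>p\<in>U. card {pr\<in>D. I p (fst pr) \<and> I p (snd pr)})"
    proof (rule sum.cong)
      fix p assume "p \<in> U"
      have "{pr\<in>D. I p (fst pr) \<and> I p (snd pr)} = {pr\<in>{M\<in>S. I p M}\<times>{M\<in>S. I p M}. fst pr \<noteq> snd pr}"
        unfolding D_def by auto
      then show "d p * (d p - 1) = card {pr\<in>D. I p (fst pr) \<and> I p (snd pr)}"
        unfolding d_def using card_offdiag[of "{M\<in>S. I p M}"] finS by simp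
    qed simp
    also have "\<dots> = (\<Sum>pr\<in>D. card {p\<in>U. I p (fst pr) \<and> I p (snd pr)})"
      by (rule double_count[OF finU finD])
    also have "\<dots> = (\<Sum>pr\<in>D. 1)"
    proof (rule sum.cong)
      fix pr assume pr: "pr \<in> D"
      then have pL: "fst pr \<in> L" "snd pr \<in> L" "fst pr \<noteq> snd pr" "fst pr \<in> S"
        using SL unfolding D_def by auto
      obtain q where q: "q\<in>P" "I q (fst pr)" "I q (snd pr)" using meet[OF pL(1,2)] by blast
      have "{p\<in>U. I p (fst pr) \<and> I p (snd pr)} = {q}"
      proof
        show "{q} \<subseteq> {p\<in>U. I p (fst pr) \<and> I p (snd pr)}" using q pL unfolding U_def by auto
        show "{p\<in>U. I p (fst pr) \<and> I p (snd pr)} \<subseteq> {q}"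
          using uniq[of _ q "fst pr" "snd pr"] q pL unfolding U_def by auto
      qed
      then show "card {p\<in>U. I p (fst pr) \<and> I p (snd pr)} = 1" by simp
    qed simp
    also have "\<dots> = card S * (card S - 1)" using card_offdiag[OF finS] unfolding D_def by simp
    finally show ?thesis .
  qed
  have dbound: "3 + d p * (d p - 1) \<le> 3 * d p" if "p \<in> U" for p
  proof -
    have "{M\<in>S. I p M} \<subseteq> lines p" "p \<in> P" using that SL unfolding U_def lines_def by auto
    then have "d p \<le> 3" unfolding d_def using lines_card lines_fin by (metis card_mono)
    moreover have "d p \<ge> 1" using that finS unfolding U_def d_def
      by (auto simp: Suc_le_eq card_gt_0_iff)
    ultimately have "d p = 1 \<or> d p = 2 \<or> d p = 3" by auto
    then show ?thesis by auto
  qed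
  have main_ineq: "3 * card U + card S * (card S - 1) \<le> 3 * (card S * (s+1))"
  proof -
    have "(\<Sum>p\<in>U. 3 + d p * (d p - 1)) \<le> (\<Sum>p\<in>U. 3 * d p)" by (rule sum_mono) (rule dbound)
    moreover have "(\<Sum>p\<in>U. 3 + d p * (d p - 1)) = (\<Sum>p\<in>U. 3) + (\<Sum>p\<in>U. d p * (d p - 1))"
      by (rule sum.distrib)
    moreover have "(\<Sum>p\<in>U. 3 * d p) = 3 * (\<Sum>p\<in>U. d p)"
      by (rule sum_distrib_left[symmetric])
    ultimately show ?thesis unfolding sum1 sum2 by simp
  qed
  have PU: "P \<subseteq> U"
  proof
    fix c assume c: "c \<in> P"
    show "c \<in> U"
    proof (rule ccontr)
      assume cU: "c \<notin> U"
      obtain la where la: "la \<in> L" "I a la" using lines_ne[OF a] by blast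
      obtain lb where lb: "lb \<in> L" "I b lb" using lines_ne[OF b(1)] by blast
      have "la \<in> S" "lb \<in> S" using la lb unfolding S_def by auto
      then have aU: "a \<in> U" and bU: "b \<in> U" using la lb a b(1) unfolding U_def by auto
      have ca: "c \<noteq> a" "c \<noteq> b" using aU bU cU by auto
      have "card {a,b,c} = 3" using ab ca by auto
      then have "\<exists>z\<in>P. z \<notin> {a,b,c} \<union> {} \<and> (\<forall>x\<in>{a,b,c}. point_graph_adj P L I z x) \<and> (\<forall>y\<in>{}. \<not> point_graph_adj P L I z y)"
        using ec[unfolded n_ec_def, rule_format, of "{a,b,c}" "{}"] a b(1) c by simp
      then obtain z where z: "z \<in> P" "z \<notin> {a,b,c}" "\<forall>x\<in>{a,b,c}. point_graph_adj P L I z x"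
        by auto
      have "z \<in> T" using z unfolding T_def point_graph_adj_def lines_def by auto
      moreover obtain l where "l \<in> L" "I z l" "I c l" using z unfolding point_graph_adj_def by auto
      ultimately have "c \<in> U" using c unfolding U_def S_def by auto
      with cU show False by simp
    qed
  qed
  have "card P \<le> card U" using card_mono[OF finU PU] .
  then have h: "(2*s+3)*(s+1) + card S * (card S - 1) \<le> 3 * (card S * (s+1))" using cP main_ineq by linarith
  have sq: "s * s + 84 > 20 * s"
  proof -
    obtain t where "s = t + 16" using s16 by (metis le_add_diff_inverse2)
    then show ?thesis by (simp add: algebra_simps)
  qed
  have h2: "2 * (s*s) + 5 * s + 3 + card S * (card S - 1) \<le> 3 * (card S * (s+1))"
    using h by (simp add: algebra_simps)
  define k where "k = card S"
  have "k \<le> 15" using kS k_def by simp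
  moreover have "2 * (s*s) + 5 * s + 3 + k * (k - 1) \<le> 3 * (k * (s+1))" using h2 k_def by simp
  moreover have "k=0 \<or> k=1 \<or> k=2 \<or> k=3 \<or> k=4 \<or> k=5 \<or> k=6 \<or> k=7 \<or> k=8 \<or> k=9 \<or> k=10 \<or> k=11 \<or> k=12 \<or> k=13 \<or> k=14 \<or> k=15"
    using \<open>k \<le> 15\<close> by presburger
  ultimately show False using sq s16
    by (elim disjE) (simp_all add: algebra_simps)
qed

end

theorem mainTheorem11:
  fixes P :: "'p set" and L :: "'l set" and I :: "'p \<Rightarrow> 'l \<Rightarrow> bool" and s :: nat
  assumes "partial_geometry P L I s 2 3"
    and "s \<ge> 2"
    and "n_ec 3 P (point_graph_adj P L I)"
  shows "s \<le> 15"
proof -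
  interpret pg23 P L I s by unfold_locales (rule assms(1))
  show ?thesis by (rule main[OF assms(3)])
qed

end
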